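(* Let $(A_0,A_1,A_2)$ be an extendable collection of cap sets in $\mathbb{F}_3^n$, and let $S \subseteq \{0,1,2\}^m$ be a recursively admissible set. Then $\left(S(A_0,A_1,A_2), A_1^m, A_2^m\right)$ is an extendable collection of cap sets in $\mathbb{F}_3^{nm}$.
   Context: A cap set is a set $A \subseteq \mathbb{F}_3^n$ such that the only solutions of $x+y+z=0$ with $x,y,z\in A$ are those with $x=y=z$. Cap sets $A_0,A_1,A_2\subseteq\mathbb{F}_3^n$ form an extendable collection if (1) whenever $x,y\in A_0$ (not necessarily distinct) and $z\in A_1\cup A_2$, $x+y+z\neq 0$; and (2) whenever $x\in A_0$, $y\in A_1$, $z\in A_2$, $x+y+z\neq 0$. A set $S\subseteq\{0,1,2\}^m$ is admissible if (1) for all distinct $s,s'\in S$ there are coordinates $i,j$ with $s_i=0\neq s'_i$ and $s_j\neq 0=s'_j$; and (2) for all distinct $s,s',s''\in S$ there is a coordinate $k$ such that the multiset $\{s_k,s'_k,s''_k\}$ equals $\{0,1,2\}$, $\{0,0,1\}$ or $\{0,0,2\}$. $S$ is recursively admissible if it is admissible, $|S|\ge 2$, and for every pair of distinct $s,s'\in S$ at least one of the following holds: (i) there are coordinates $i,j$ with $\{s_i,s'_i\}=\{0,1\}$ and $\{s_j,s'_j\}=\{0,2\}$; (ii) there is a coordinate $k$ with $s_k=s'_k=0$. For $s=(s_1,\dots,s_m)\in\{0,1,2\}^m$ put $s(A_0,A_1,A_2)=A_{s_1}\times\cdots\times A_{s_m}\subseteq\mathbb{F}_3^{nm}$ and $S(A_0,A_1,A_2)=\bigcup_{s\in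 S}s(A_0,A_1,A_2)$. $A_i^m$ denotes the $m$-fold direct product $A_i\times\cdots\times A_i\subseteq \mathbb{F}_3^{nm}$. *)

theory Defs
  imports Main "HOL-Library.Numeral_Type" "HOL-Library.Multiset"
begin

text \<open>The field F_3 is the type 3 (integers mod 3). An element of F_3^n is a
  list of length n over this type; addition is componentwise.\<close>

type_synonym f3vec = "3 list"

definition vec :: "nat \<Rightarrow> f3vec set" where
  "vec n = {x. length x = n}"

definition sum3_zero :: "f3vec \<Rightarrow> f3vec \<Rightarrow> f3vec \<Rightarrow> bool" where
  "sum3_zero x y z \<longleftrightarrow> map2 (+) (map2 (+) x y) z = replicate (length x) 0"

definition cap_set :: "nat \<Rightarrow> f3vec set \<Rightarrow> bool" where
  "cap_set n A \<longleftrightarrow> A \<subseteq> vec n \<and>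
     (\<forall>x\<in>A. \<forall>y\<in>A. \<forall>z\<in>A. sum3_zero x y z \<longrightarrow> x = y \<and> y = z)"

definition extendable :: "nat \<Rightarrow> f3vec set \<Rightarrow> f3vec set \<Rightarrow> f3vec set \<Rightarrow> bool" where
  "extendable n A0 A1 A2 \<longleftrightarrow>
     cap_set n A0 \<and> cap_set n A1 \<and> cap_set n A2 \<and>
     (\<forall>x\<in>A0. \<forall>y\<in>A0. \<forall>z\<in>A1 \<union> A2. \<not> sum3_zero x y z) \<and>
     (\<forall>x\<in>A0. \<forall>y\<in>A1. \<forall>z\<in>A2. \<not> sum3_zero x y z)"

definition words :: "nat \<Rightarrow> nat list set" where
  "words m = {s. length s = m \<and> set s \<subseteq> {0,1,2}}"

definition admissible :: "nat list set \<Rightarrow> bool" where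
  "admissible S \<longleftrightarrow>
     (\<forall>s\<in>S. \<forall>s'\<in>S. s \<noteq> s' \<longrightarrow>
        (\<exists>i<length s. \<exists>j<length s. s!i = 0 \<and> s'!i \<noteq> 0 \<and> s!j \<noteq> 0 \<and> s'!j = 0)) \<and>
     (\<forall>s\<in>S. \<forall>s'\<in>S. \<forall>s''\<in>S. s \<noteq> s' \<and> s \<noteq> s'' \<and> s' \<noteq> s'' \<longrightarrow>
        (\<exists>k<length s. {#s!k, s'!k, s''!k#} \<in> {{#0,1,2#}, {#0,0,1#}, {#0,0,2#}}))"

definition recursively_admissible :: "nat list set \<Rightarrow> bool" where
  "recursively_admissible S \<longleftrightarrow> admissible S \<and> 2 \<le> card S \<and>
     (\<forall>s\<in>S. \<forall>s'\<in>S. s \<noteq> s' \<longrightarrow>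
        (\<exists>i<length s. \<exists>j<length s. {s!i, s'!i} = {0,1} \<and> {s!j, s'!j} = {0,2}) \<or>
        (\<exists>k<length s. s!k = 0 \<and> s'!k = 0))"

definition sel :: "f3vec set \<Rightarrow> f3vec set \<Rightarrow> f3vec set \<Rightarrow> nat \<Rightarrow> f3vec set" where
  "sel A0 A1 A2 k = (if k = 0 then A0 else if k = 1 then A1 else A2)"

text \<open>s(A0,A1,A2) = A_{s_1} x ... x A_{s_m}, realised by concatenating the blocks.\<close>

definition word_prod :: "nat list \<Rightarrow> f3vec set \<Rightarrow> f3vec set \<Rightarrow> f3vec set \<Rightarrow> f3vec set" where
  "word_prod s A0 A1 A2 =
     {concat xs | xs. length xs = length s \<and> (\<forall>i<length s. xs!i \<in> sel A0 A1 A2 (s!i))}"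

definition set_prod :: "nat list set \<Rightarrow> f3vec set \<Rightarrow> f3vec set \<Rightarrow> f3vec set \<Rightarrow> f3vec set" where
  "set_prod S A0 A1 A2 = (\<Union>s\<in>S. word_prod s A0 A1 A2)"

definition power_prod :: "nat \<Rightarrow> f3vec set \<Rightarrow> f3vec set" where
  "power_prod m A = {concat xs | xs. length xs = m \<and> (\<forall>i<m. xs!i \<in> A)}"

end

theory Submission
  imports Defs
begin

definition T12 :: "(nat \<times> nat \<times> nat) set" where
  "T12 = {(0,1,2),(0,2,1),(1,0,2),(1,2,0),(2,0,1),(2,1,0),(0,0,1),(0,1,0),(1,0,0),(0,0,2),(0,2,0),(2,0,0)}"

lemma mset_T12: "(a::nat) \<in> {0,1,2} \<Longrightarrow> b \<in> {0,1,2} \<Longrightarrow> c \<in> {0,1,2} \<Longrightarrow>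
  {#a,b,c#} \<in> {{#0,1,2#}, {#0,0,1#}, {#0,0,2#}} \<Longrightarrow> (a,b,c) \<in> T12"
  unfolding T12_def
  apply (elim insertE emptyE; simp add: add_eq_conv_ex)
  done

lemma sz_iff: "length y = length x \<Longrightarrow> length z = length x \<Longrightarrow>
  sum3_zero x y z \<longleftrightarrow> (\<forall>j<length x. x!j + y!j + z!j = 0)"
  unfolding sum3_zero_def by (simp add: list_eq_iff_nth_eq)

lemma sz_perm: "length y = length x \<Longrightarrow> length z = length x \<Longrightarrow> sum3_zero x y z \<Longrightarrow>
  sum3_zero y x z \<and> sum3_zero x z y \<and> sum3_zero z y x \<and> sum3_zero y z x \<and> sum3_zero z x y"
  by (simp add: sz_iff algebra_simps)

lemma sz_append: "length c = length a \<Longrightarrow> length e = length a \<Longrightarrow> length d = length b \<Longrightarrow> length f = length b \<Longrightarrow>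
  sum3_zero (a@b) (c@d) (e@f) \<longleftrightarrow> sum3_zero a c e \<and> sum3_zero b d f"
  unfolding sum3_zero_def by (simp add: replicate_add append_eq_append_conv)

lemma concat_len: "\<forall>x\<in>set xs. length x = n \<Longrightarrow> length (concat xs) = length xs * n"
  by (induction xs) auto

lemma sz_concat: "length ys = length xs \<Longrightarrow> length zs = length xs \<Longrightarrow> \<forall>x\<in>set xs. length x = n \<Longrightarrow>
  \<forall>x\<in>set ys. length x = n \<Longrightarrow> \<forall>x\<in>set zs. length x = n \<Longrightarrow>
  sum3_zero (concat xs) (concat ys) (concat zs) \<Longrightarrow> i < length xs \<Longrightarrow> sum3_zero (xs!i) (ys!i) (zs!i)"
proof (induction xs arbitrary: ys zs i)
  case Nil
  then show ?case by simp
next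
  case (Cons x xs)
  obtain y ys' where y: "ys = y # ys'" using Cons.prems(1) by (cases ys) auto
  obtain z zs' where z: "zs = z # zs'" using Cons.prems(2) by (cases zs) auto
  have l: "length (concat ys') = length (concat xs)" "length (concat zs') = length (concat xs)"
    using Cons.prems y z concat_len[of ys' n] concat_len[of zs' n] concat_len[of xs n]
    by (simp_all del: length_concat)
  have "sum3_zero x y z \<and> sum3_zero (concat xs) (concat ys') (concat zs')"
    using Cons.prems y z l by (subst sz_append[symmetric]) simp_all
  then show ?case using Cons y z by (cases i) auto
qed

lemma sel_cap: "extendable n A0 A1 A2 \<Longrightarrow> cap_set n (sel A0 A1 A2 k)"
  by (simp add: extendable_def sel_def)

lemma sel_len: "extendable n A0 A1 A2 \<Longrightarrow> x \<in> sel A0 A1 A2 k \<Longrightarrow> length x = n"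
  using sel_cap[of n A0 A1 A2 k] by (auto simp: cap_set_def vec_def)

lemma bad_triple:
  assumes ext: "extendable n A0 A1 A2" and t: "(a,b,c) \<in> T12"
    and x: "x \<in> sel A0 A1 A2 a" and y: "y \<in> sel A0 A1 A2 b" and z: "z \<in> sel A0 A1 A2 c"
  shows "\<not> sum3_zero x y z"
proof
  assume sz: "sum3_zero x y z"
  have l: "length x = n" "length y = n" "length z = n" using sel_len[OF ext] x y z by auto
  have P: "sum3_zero x y z \<and> sum3_zero y x z \<and> sum3_zero x z y \<and> sum3_zero z y x \<and> sum3_zero y z x \<and> sum3_zero z x y"
    using sz_perm[of y x z] l sz by simp
  have E1: "\<forall>x\<in>A0. \<forall>y\<in>A0. \<forall>z\<in>A1 \<union> A2. \<not> sum3_zero x y z"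
   and E2: "\<forall>x\<in>A0. \<forall>y\<in>A1. \<forall>z\<in>A2. \<not> sum3_zero x y z"
    using ext by (simp_all add: extendable_def)
  from t show False unfolding T12_def
    using x y z P E1 E2 by (auto simp: sel_def)
qed

lemma word_len: "extendable n A0 A1 A2 \<Longrightarrow> x \<in> word_prod s A0 A1 A2 \<Longrightarrow> length x = n * length s"
  unfolding word_prod_def
proof clarify
  fix xs assume "extendable n A0 A1 A2" "length xs = length s" "\<forall>i<length s. xs ! i \<in> sel A0 A1 A2 (s ! i)"
  then have "\<forall>i<length xs. length (xs!i) = n" using sel_len by metis
  then have "\<forall>x\<in>set xs. length x = n" by (auto simp: in_set_conv_nth)
  then show "length (concat xs) = n * length s" using concat_len[of xs n] \<open>length xs = length s\<close>
    by (simp del: length_concat)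
qed

lemma blocks:
  assumes ext: "extendable n A0 A1 A2"
    and x: "x \<in> word_prod s A0 A1 A2" and y: "y \<in> word_prod t A0 A1 A2" and z: "z \<in> word_prod u A0 A1 A2"
    and l: "length t = length s" "length u = length s" and sz: "sum3_zero x y z"
  obtains xs ys zs where "x = concat xs" "y = concat ys" "z = concat zs"
    "length xs = length s" "length ys = length s" "length zs = length s"
    "\<forall>i<length s. xs!i \<in> sel A0 A1 A2 (s!i) \<and> ys!i \<in> sel A0 A1 A2 (t!i) \<and> zs!i \<in> sel A0 A1 A2 (u!i)
       \<and> sum3_zero (xs!i) (ys!i) (zs!i)"
proof -
  obtain xs where xs: "x = concat xs" "length xs = length s" "\<forall>i<length s. xs!i \<in> sel A0 A1 A2 (s!i)"
    using x by (auto simp: word_prod_def)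
  obtain ys where ys: "y = concat ys" "length ys = length s" "\<forall>i<length s. ys!i \<in> sel A0 A1 A2 (t!i)"
    using y l by (auto simp: word_prod_def)
  obtain zs where zs: "z = concat zs" "length zs = length s" "\<forall>i<length s. zs!i \<in> sel A0 A1 A2 (u!i)"
    using z l by (auto simp: word_prod_def)
  have "\<forall>x\<in>set xs. length x = n" "\<forall>x\<in>set ys. length x = n" "\<forall>x\<in>set zs. length x = n"
    using xs ys zs sel_len[OF ext] by (metis in_set_conv_nth)+
  then have "\<forall>i<length s. sum3_zero (xs!i) (ys!i) (zs!i)"
    using sz_concat[of ys xs zs n] xs ys zs sz by auto
  then show ?thesis using that xs ys zs by auto
qed

lemma no_sz:
  assumes ext: "extendable n A0 A1 A2"
    and x: "x \<in> word_prod s A0 A1 A2" and y: "y \<in> word_prod t A0 A1 A2" and z: "z \<in> word_prod u A0 A1 A2"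
    and l: "length t = length s" "length u = length s" and i: "i < length s" and T: "(s!i, t!i, u!i) \<in> T12"
  shows "\<not> sum3_zero x y z"
proof
  assume sz: "sum3_zero x y z"
  obtain xs ys zs where "\<forall>i<length s. xs!i \<in> sel A0 A1 A2 (s!i) \<and> ys!i \<in> sel A0 A1 A2 (t!i) \<and> zs!i \<in> sel A0 A1 A2 (u!i)
       \<and> sum3_zero (xs!i) (ys!i) (zs!i)"
    using blocks[OF ext x y z l sz] by metis
  then show False using bad_triple[OF ext T] i by blast
qed

lemma same_word:
  assumes ext: "extendable n A0 A1 A2"
    and x: "x \<in> word_prod s A0 A1 A2" and y: "y \<in> word_prod s A0 A1 A2" and z: "z \<in> word_prod s A0 A1 A2"
    and sz: "sum3_zero x y z"
  shows "x = y \<and> y = z"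
proof -
  obtain xs ys zs where b: "x = concat xs" "y = concat ys" "z = concat zs"
    "length xs = length s" "length ys = length s" "length zs = length s"
    "\<forall>i<length s. xs!i \<in> sel A0 A1 A2 (s!i) \<and> ys!i \<in> sel A0 A1 A2 (s!i) \<and> zs!i \<in> sel A0 A1 A2 (s!i)
       \<and> sum3_zero (xs!i) (ys!i) (zs!i)"
    using blocks[OF ext x y z _ _ sz] by metis
  have "\<forall>i<length s. xs!i = ys!i \<and> ys!i = zs!i"
    using b(7) sel_cap[OF ext] unfolding cap_set_def by blast
  then have "xs = ys" "ys = zs" using b by (auto intro: nth_equalityI)
  then show ?thesis using b by simp
qed

lemma power_word: "power_prod m A1 = word_prod (replicate m 1) A0 A1 A2"
  "power_prod m A2 = word_prod (replicate m 2) A0 A1 A2"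
  by (auto simp: power_prod_def word_prod_def sel_def)


theorem lemma2p9:
  fixes n m :: nat and A0 A1 A2 :: "3 list set" and S :: "nat list set"
  assumes "extendable n A0 A1 A2"
    and "S \<subseteq> words m"
    and "recursively_admissible S"
  shows "extendable (n * m) (set_prod S A0 A1 A2) (power_prod m A1) (power_prod m A2)"
proof -
  note ext = assms(1)
  have W: "\<And>s. s \<in> S \<Longrightarrow> length s = m \<and> (\<forall>i<m. s!i \<in> {0,1,2})"
    using assms(2) unfolding words_def by (force dest: nth_mem)
  have adm: "admissible S" and c2: "2 \<le> card S" and
    RA: "\<forall>s\<in>S. \<forall>s'\<in>S. s \<noteq> s' \<longrightarrow>
        (\<exists>i<length s. \<exists>j<length s. {s!i, s'!i} = {0,1} \<and> {s!j, s'!j} = {0,2}) \<or>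
        (\<exists>k<length s. s!k = 0 \<and> s'!k = 0)"
    using assms(3) unfolding recursively_admissible_def by auto
  have A1: "\<forall>s\<in>S. \<forall>s'\<in>S. s \<noteq> s' \<longrightarrow>
        (\<exists>i<length s. \<exists>j<length s. s!i = 0 \<and> s'!i \<noteq> 0 \<and> s!j \<noteq> 0 \<and> s'!j = 0)"
   and A2: "\<forall>s\<in>S. \<forall>s'\<in>S. \<forall>s''\<in>S. s \<noteq> s' \<and> s \<noteq> s'' \<and> s' \<noteq> s'' \<longrightarrow>
        (\<exists>k<length s. {#s!k, s'!k, s''!k#} \<in> {{#0,1,2#}, {#0,0,1#}, {#0,0,2#}})"
    using adm unfolding admissible_def by auto
  have other: "\<exists>s'\<in>S. s' \<noteq> s" if "s \<in> S" for s
  proof (rule ccontr)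
    assume "\<not> ?thesis"
    then have "S \<subseteq> {s}" by auto
    then have "card S \<le> 1" using card_mono[of "{s}" S] by simp
    then show False using c2 by simp
  qed
  have zero: "\<exists>i<m. s!i = 0" if sS: "s \<in> S" for s
  proof -
    obtain s' where s': "s' \<in> S" "s' \<noteq> s" using other[OF sS] by blast
    from A1[rule_format, OF sS s'(1)] s'(2) obtain i where "i < length s" "s!i = 0" by blast
    then show ?thesis using W[OF sS] by auto
  qed
  have rep: "length (replicate m c) = m" "\<And>i. i < m \<Longrightarrow> replicate m c ! i = c" for c :: nat by simp_all
  have vS: "set_prod S A0 A1 A2 \<subseteq> vec (n*m)"
    using word_len[OF ext] W unfolding set_prod_def vec_def by auto
  have vP: "word_prod (replicate m c) A0 A1 A2 \<subseteq> vec (n*m)" for c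
    using word_len[OF ext] unfolding vec_def by auto
  have capP: "cap_set (n*m) (word_prod (replicate m c) A0 A1 A2)" for c
    using vP same_word[OF ext] unfolding cap_set_def by blast
  have capS: "cap_set (n*m) (set_prod S A0 A1 A2)"
    unfolding cap_set_def
  proof (rule conjI[OF vS], intro ballI impI)
    fix x y z assume "x \<in> set_prod S A0 A1 A2" "y \<in> set_prod S A0 A1 A2" "z \<in> set_prod S A0 A1 A2"
      and sz: "sum3_zero x y z"
    then obtain s t u where s: "s \<in> S" "x \<in> word_prod s A0 A1 A2" and t: "t \<in> S" "y \<in> word_prod t A0 A1 A2"
      and u: "u \<in> S" "z \<in> word_prod u A0 A1 A2" unfolding set_prod_def by blast
    have l: "length s = m" "length t = m" "length u = m" using W s t u by auto
    have ns: False if "i < m" "(s!i, t!i, u!i) \<in> T12" for i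
      using no_sz[OF ext s(2) t(2) u(2)] l that sz by simp
    have vals: "s!i \<in> {0,1,2}" "t!i \<in> {0,1,2}" "u!i \<in> {0,1,2}" if "i < m" for i
      using W s t u that by auto
    show "x = y \<and> y = z"
    proof (cases "s = t \<and> t = u")
      case True
      then show ?thesis using same_word[OF ext s(2) _ _ sz] t u by simp
    next
      case False
      then consider "s = t" "t \<noteq> u" | "s = u" "s \<noteq> t" | "t = u" "s \<noteq> t" | "s \<noteq> t" "s \<noteq> u" "t \<noteq> u"
        by blast
      then show ?thesis
      proof cases
        case 1
        then obtain i where i: "i < m" "s!i = 0" "u!i \<noteq> 0" using A1[rule_format, OF s(1) u(1)] 1 l by auto
        have "u!i = 1 \<or> u!i = 2" using vals(3)[OF i(1)] i(3) by auto
        then have "(s!i,t!i,u!i) \<in> T12" using 1 i by (auto simp: T12_def)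
        then show ?thesis using ns i by blast
      next
        case 2
        then obtain i where i: "i < m" "s!i = 0" "t!i \<noteq> 0" using A1[rule_format, OF s(1) t(1)] 2 l by auto
        have "t!i = 1 \<or> t!i = 2" using vals(2)[OF i(1)] i(3) by auto
        then have "(s!i,t!i,u!i) \<in> T12" using 2 i by (auto simp: T12_def)
        then show ?thesis using ns i by blast
      next
        case 3
        then obtain i where i: "i < m" "t!i = 0" "s!i \<noteq> 0" using A1[rule_format, OF t(1) s(1)] 3 l by auto
        have "s!i = 1 \<or> s!i = 2" using vals(1)[OF i(1)] i(3) by auto
        then have "(s!i,t!i,u!i) \<in> T12" using 3 i by (auto simp: T12_def)
        then show ?thesis using ns i by blast
      next
        case 4
        then obtain k where "k < m" "{#s!k, t!k, u!k#} \<in> {{#0,1,2#}, {#0,0,1#}, {#0,0,2#}}"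
          using A2[rule_format, OF s(1) t(1) u(1)] 4 l by auto
        then show ?thesis using ns[of k] vals[of k] mset_T12 by blast
      qed
    qed
  qed
  have E1: "\<not> sum3_zero x y z" if x: "x \<in> set_prod S A0 A1 A2" and y: "y \<in> set_prod S A0 A1 A2"
    and z: "z \<in> word_prod (replicate m c) A0 A1 A2" and c: "c = 1 \<or> c = 2" for x y z c
  proof -
    obtain s t where s: "s \<in> S" "x \<in> word_prod s A0 A1 A2" and t: "t \<in> S" "y \<in> word_prod t A0 A1 A2"
      using x y unfolding set_prod_def by blast
    have l: "length s = m" "length t = m" using W s t by auto
    have ns: "\<not> sum3_zero x y z" if "i < m" "(s!i, t!i, c) \<in> T12" for i
      using no_sz[OF ext s(2) t(2) z] l that by simp
    have vals: "s!i \<in> {0,1,2}" "t!i \<in> {0,1,2}" if "i < m" for i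
      using W s t that by auto
    show ?thesis
    proof (cases "s = t")
      case True
      then obtain i where i: "i < m" "s!i = 0" using zero s by blast
      have "(s!i,t!i,c) \<in> T12" using c True i by (auto simp: T12_def)
      then show ?thesis using ns i by blast
    next
      case False
      then have "(\<exists>i<m. \<exists>j<m. {s!i, t!i} = {0,1} \<and> {s!j, t!j} = {0,2}) \<or> (\<exists>k<m. s!k = 0 \<and> t!k = 0)"
        using RA[rule_format, OF s(1) t(1) False] l by simp
      then show ?thesis
      proof
        assume "\<exists>k<m. s!k = 0 \<and> t!k = 0"
        then obtain k where k: "k < m" "s!k = 0" "t!k = 0" by blast
        have "(s!k,t!k,c) \<in> T12" using c k by (auto simp: T12_def)
        then show ?thesis using ns k by blast
      next
        assume "\<exists>i<m. \<exists>j<m. {s!i, t!i} = {0,1} \<and> {s!j, t!j} = {0,2}"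
        then obtain i j where ij: "i < m" "j < m" "{s!i, t!i} = {0,1}" "{s!j, t!j} = {0,2}" by blast
        have i01: "(s!i = 0 \<and> t!i = 1) \<or> (s!i = 1 \<and> t!i = 0)" using ij(3) by (simp add: doubleton_eq_iff)
        have j02: "(s!j = 0 \<and> t!j = 2) \<or> (s!j = 2 \<and> t!j = 0)" using ij(4) by (simp add: doubleton_eq_iff)
        have "(s!i,t!i,c) \<in> T12 \<or> (s!j,t!j,c) \<in> T12"
        proof (cases "c = 1")
          case True
          then show ?thesis using j02 unfolding T12_def by auto
        next
          case False
          then have "c = 2" using c by simp
          then show ?thesis using i01 unfolding T12_def by auto
        qed
        then show ?thesis using ns ij by blast
      qed
    qed
  qed
  have E2: "\<not> sum3_zero x y z" if x: "x \<in> set_prod S A0 A1 A2" and y: "y \<in> word_prod (replicate m 1) A0 A1 A2"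
    and z: "z \<in> word_prod (replicate m 2) A0 A1 A2" for x y z
  proof -
    obtain s where s: "s \<in> S" "x \<in> word_prod s A0 A1 A2"
      using x unfolding set_prod_def by blast
    have l: "length s = m" using W s by auto
    obtain i where "i < m" "s!i = 0" using zero s by blast
    then show ?thesis using no_sz[OF ext s(2) y z] l by (simp add: T12_def)
  qed
  show ?thesis unfolding extendable_def power_word(1)[of m A1 A0 A2] power_word(2)[of m A2 A0 A1]
  proof (intro conjI capS capP ballI)
    fix x y z
    assume "x \<in> set_prod S A0 A1 A2" "y \<in> set_prod S A0 A1 A2"
      "z \<in> word_prod (replicate m 1) A0 A1 A2 \<union> word_prod (replicate m 2) A0 A1 A2"
    then show "\<not> sum3_zero x y z" using E1 by blast
  next
    fix x y z
    assume "x \<in> set_prod S A0 A1 A2" "y \<in> word_prod (replicate m 1) A0 A1 A2"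
      "z \<in> word_prod (replicate m 2) A0 A1 A2"
    then show "\<not> sum3_zero x y z" using E2 by blast
  qed
qed

end
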